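(* Let $f : \mathbb{R} \to \mathbb{R}$ and $g : \mathbb{R}^n \to \mathbb{R}$, and let $\bar x \in \mathbb{R}^n$. Let $g_{ave}$ be a concave underestimator of $g$ at $\bar x$, let $f_{ave}$ be a concave underestimator of $f$ at $g(\bar x)$, and let $g^{vex}$ be a convex overestimator of $g$ at $\bar x$. Then \[ h(x) := \min \{ f_{ave}(g_{ave}(x)),\ f_{ave}(g^{vex}(x)) \} \] is a concave underestimator of $x \mapsto f(g(x))$ at $\bar x$.
   Context: For a function $\phi : \mathbb{R}^d \to \mathbb{R}$ and a point $\bar y \in \mathbb{R}^d$, a function $\phi_{ave} : \mathbb{R}^d \to \mathbb{R}$ is a concave underestimator of $\phi$ at $\bar y$ if $\phi_{ave}$ is concave, $\phi_{ave}(y) \le \phi(y)$ for all $y \in \mathbb{R}^d$, and $\phi_{ave}(\bar y) = \phi(\bar y)$. Similarly, $\phi^{vex} : \mathbb{R}^d \to \mathbb{R}$ is a convex overestimator of $\phi$ at $\bar y$ if $\phi^{vex}$ is convex, $\phi^{vex}(y) \ge \phi(y)$ for all $y \in \mathbb{R}^d$, and $\phi^{vex}(\bar y) = \phi(\bar y)$. *)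

theory Defs
  imports "HOL-Analysis.Analysis"
begin

definition concave_underestimator ::
  "('a::real_vector \<Rightarrow> real) \<Rightarrow> 'a \<Rightarrow> ('a \<Rightarrow> real) \<Rightarrow> bool" where
  "concave_underestimator phi ybar psi \<longleftrightarrow>
     concave_on UNIV psi \<and> (\<forall>y. psi y \<le> phi y) \<and> psi ybar = phi ybar"

definition convex_overestimator ::
  "('a::real_vector \<Rightarrow> real) \<Rightarrow> 'a \<Rightarrow> ('a \<Rightarrow> real) \<Rightarrow> bool" where
  "convex_overestimator phi ybar psi \<longleftrightarrow>
     convex_on UNIV psi \<and> (\<forall>y. psi y \<ge> phi y) \<and> psi ybar = phi ybar"

end

theory Submission
  imports Defs
begin

lemma concave_min_interval:
  fixes F :: "real \<Rightarrow> real"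
  assumes c: "concave_on UNIV F" and ay: "a \<le> y" and yb: "y \<le> b"
  shows "min (F a) (F b) \<le> F y"
proof (cases "a = b")
  case True
  then show ?thesis using ay yb by auto
next
  case False
  then have ab: "a < b" using ay yb by auto
  define t where "t = (y - a) / (b - a)"
  have t0: "t \<ge> 0" and t1: "t \<le> 1" using ab ay yb by (auto simp: t_def field_simps)
  have "t * (b - a) = y - a" using ab by (simp add: t_def)
  then have yeq: "y = (1 - t) *\<^sub>R a + t *\<^sub>R b" by (simp add: algebra_simps)
  have "F y \<ge> (1 - t) * F a + t * F b"
    using concave_onD[OF c t0 t1] yeq by simp
  moreover have "(1 - t) * F a + t * F b \<ge> (1 - t) * min (F a) (F b) + t * min (F a) (F b)"
    using t0 t1 by (intro add_mono mult_left_mono) auto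
  ultimately show ?thesis by (simp add: algebra_simps)
qed

theorem theorem1:
  fixes f :: "real \<Rightarrow> real" and g :: "real ^ 'n \<Rightarrow> real" and xbar :: "real ^ 'n"
    and f_ave :: "real \<Rightarrow> real" and g_ave g_vex :: "real ^ 'n \<Rightarrow> real"
  assumes "concave_underestimator g xbar g_ave"
    and "concave_underestimator f (g xbar) f_ave"
    and "convex_overestimator g xbar g_vex"
  shows "concave_underestimator (\<lambda>x. f (g x)) xbar
           (\<lambda>x. min (f_ave (g_ave x)) (f_ave (g_vex x)))"
proof -
  have ga: "concave_on UNIV g_ave" "\<And>y. g_ave y \<le> g y" "g_ave xbar = g xbar"
    using assms(1) by (auto simp: concave_underestimator_def)
  have fa: "concave_on UNIV f_ave" "\<And>y. f_ave y \<le> f y" "f_ave (g xbar) = f (g xbar)"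
    using assms(2) by (auto simp: concave_underestimator_def)
  have gv: "convex_on UNIV g_vex" "\<And>y. g_vex y \<ge> g y" "g_vex xbar = g xbar"
    using assms(3) by (auto simp: convex_overestimator_def)
  define h where "h = (\<lambda>x. min (f_ave (g_ave x)) (f_ave (g_vex x)))"
  have conc: "concave_on UNIV h"
    unfolding concave_on_iff
  proof (intro conjI ballI allI impI)
    show "convex (UNIV :: (real ^ 'n) set)" by simp
  next
    fix x1 x2 :: "real ^ 'n" and u v :: real
    assume u: "u \<ge> 0" and v: "v \<ge> 0" and uv: "u + v = 1"
    define x where "x = u *\<^sub>R x1 + v *\<^sub>R x2"
    define A where "A = u * g_ave x1 + v * g_ave x2"
    define B where "B = u * g_vex x1 + v * g_vex x2"
    have Ax: "A \<le> g_ave x"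
      using ga(1) u v uv unfolding concave_on_iff A_def x_def by auto
    have Bx: "g_vex x \<le> B"
      using gv(1) u v uv unfolding convex_on_def B_def x_def by auto
    have gg: "g_ave x \<le> g_vex x" using ga(2) gv(2) order_trans by metis
    have m1: "min (f_ave A) (f_ave B) \<le> f_ave (g_ave x)"
      using concave_min_interval[OF fa(1) Ax] gg Bx by auto
    have m2: "min (f_ave A) (f_ave B) \<le> f_ave (g_vex x)"
      using concave_min_interval[OF fa(1)] Ax gg Bx by auto
    have hA: "u * h x1 + v * h x2 \<le> f_ave A"
    proof -
      have "f_ave A \<ge> u * f_ave (g_ave x1) + v * f_ave (g_ave x2)"
        using fa(1) u v uv unfolding concave_on_iff A_def by auto
      moreover have "u * h x1 + v * h x2 \<le> u * f_ave (g_ave x1) + v * f_ave (g_ave x2)"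
        using u v unfolding h_def by (intro add_mono mult_left_mono) auto
      ultimately show ?thesis by linarith
    qed
    have hB: "u * h x1 + v * h x2 \<le> f_ave B"
    proof -
      have "f_ave B \<ge> u * f_ave (g_vex x1) + v * f_ave (g_vex x2)"
        using fa(1) u v uv unfolding concave_on_iff B_def by auto
      moreover have "u * h x1 + v * h x2 \<le> u * f_ave (g_vex x1) + v * f_ave (g_vex x2)"
        using u v unfolding h_def by (intro add_mono mult_left_mono) auto
      ultimately show ?thesis by linarith
    qed
    show "u * h x1 + v * h x2 \<le> h (u *\<^sub>R x1 + v *\<^sub>R x2)"
      using hA hB m1 m2 unfolding h_def x_def[symmetric] by linarith
  qed
  have under: "\<And>x. h x \<le> f (g x)"
  proof -
    fix x
    have "h x \<le> f_ave (g x)"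
      unfolding h_def using concave_min_interval[OF fa(1) ga(2) gv(2)] by simp
    then show "h x \<le> f (g x)" using fa(2) order_trans by blast
  qed
  have eq: "h xbar = f (g xbar)" unfolding h_def using ga(3) gv(3) fa(3) by simp
  show ?thesis using conc under eq unfolding concave_underestimator_def h_def by auto
qed

end
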